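(* Let $n\ge 1$, let $F:\mathbb{F}_{2^n}\to\mathbb{F}_{2^n}$ be a function and let $c\in\mathbb{F}_{2^n}^*$. Then ${}_c\Delta_F(a,b)={}_{c^{-1}}\Delta_F(a,bc^{-1})$ for all $a\in\mathbb{F}_{2^n}^*$ and $b\in\mathbb{F}_{2^n}$. If moreover $F$ is a permutation of $\mathbb{F}_{2^n}$, then ${}_c\Delta_F={}_{c^{-1}}\Delta_F$.
   Context: For $F:\mathbb{F}_{2^n}\to\mathbb{F}_{2^n}$ and $c\in\mathbb{F}_{2^n}$, the $c$-differential of $F$ in direction $a$ is ${}_cD_aF(x)=F(x+a)-cF(x)$ (in characteristic $2$ this is $F(x+a)+cF(x)$). For $a,b\in\mathbb{F}_{2^n}$, ${}_c\Delta_F(a,b)$ denotes the number of $x\in\mathbb{F}_{2^n}$ with ${}_cD_aF(x)=b$. The $c$-differential uniformity of $F$ is ${}_c\Delta_F=\max\{{}_c\Delta_F(a,b): a,b\in\mathbb{F}_{2^n},\ a\neq 0 \text{ if } c=1\}$. *)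

theory Defs
  imports Main
begin

definition c_diff :: "('a::field \<Rightarrow> 'a) \<Rightarrow> 'a \<Rightarrow> 'a \<Rightarrow> 'a \<Rightarrow> 'a" where
  "c_diff F c a x = F (x + a) - c * F x"

definition c_Delta :: "('a::{field,finite} \<Rightarrow> 'a) \<Rightarrow> 'a \<Rightarrow> 'a \<Rightarrow> 'a \<Rightarrow> nat" where
  "c_Delta F c a b = card {x. c_diff F c a x = b}"

definition c_unif :: "('a::{field,finite} \<Rightarrow> 'a) \<Rightarrow> 'a \<Rightarrow> nat" where
  "c_unif F c = Max {c_Delta F c a b | a b. a \<noteq> 0 \<or> c \<noteq> 1}"

end

theory Submission
  imports Defs "HOL-Number_Theory.Number_Theory"
begin

lemma char2:
  assumes "n \<ge> 1" and "card (UNIV :: 'a::{field,finite} set) = 2 ^ n"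
  shows "(2::'a) = 0"
proof -
  have pos: "CHAR('a) > 0" by (rule finite_imp_CHAR_pos) simp
  have pr: "prime CHAR('a)" using prime_CHAR_semidom[OF pos] .
  have "CHAR('a) dvd 2 ^ n" using CHAR_dvd_CARD[where 'a='a] assms(2) by simp
  then have "CHAR('a) dvd 2" using pr prime_dvd_power by blast
  then have "CHAR('a) \<le> 2" by (rule dvd_imp_le) simp
  then have "CHAR('a) = 2" using pr prime_gt_1_nat[OF pr] by linarith
  then show ?thesis using of_nat_CHAR[where 'a='a] by simp
qed

lemma neg_eq:
  assumes "(2::'a::field) = 0" shows "- (x::'a) = x"
proof -
  have "x + x = 2 * x" by simp
  then have "x + x = 0" using assms by simp
  then show ?thesis by (simp add: add_eq_0_iff2)
qed

lemma part1:
  fixes F :: "'a::{field,finite} \<Rightarrow> 'a"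
  assumes two: "(2::'a) = 0" and c: "c \<noteq> 0"
  shows "c_Delta F c a b = c_Delta F (inverse c) a (b * inverse c)"
proof -
  have neg: "\<And>x::'a. - x = x" using neg_eq[OF two] .
  have aa: "\<And>x. x + a + a = x"
    by (metis add.assoc add_eq_0_iff2 add.right_neutral neg)
  have "{x. c_diff F (inverse c) a x = b * inverse c} = (\<lambda>x. x + a) ` {x. c_diff F c a x = b}"
  proof (intro Set.set_eqI iffI)
    fix y assume "y \<in> {x. c_diff F (inverse c) a x = b * inverse c}"
    then have h: "F (y + a) - inverse c * F y = b * inverse c" by (simp add: c_diff_def)
    have "F (y + a + a) - c * F (y + a) = b"
    proof -
      have "c * (F (y + a) - inverse c * F y) = c * (b * inverse c)" using h by simp
      then have "c * F (y + a) - F y = b" using c by (simp add: algebra_simps)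
      then have "- (c * F (y + a) - F y) = - b" by simp
      then have "F y - c * F (y + a) = b" using neg[of b] by simp
      then show ?thesis by (simp only: aa)
    qed
    then show "y \<in> (\<lambda>x. x + a) ` {x. c_diff F c a x = b}"
      by (intro image_eqI[of _ _ "y + a"]) (auto simp: c_diff_def aa)
  next
    fix y assume "y \<in> (\<lambda>x. x + a) ` {x. c_diff F c a x = b}"
    then obtain x where y: "y = x + a" and h: "F (x + a) - c * F x = b" by (auto simp: c_diff_def)
    have "F (y + a) - inverse c * F y = b * inverse c"
    proof -
      have "inverse c * (F (x + a) - c * F x) = inverse c * b" using h by simp
      then have "inverse c * F (x + a) - F x = b * inverse c" using c by (simp add: algebra_simps)
      then have "- (inverse c * F (x + a) - F x) = - (b * inverse c)" by simp
      then have "F x - inverse c * F (x + a) = b * inverse c" using neg[of "b * inverse c"] by simp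
      then show ?thesis by (simp only: y aa)
    qed
    then show "y \<in> {x. c_diff F (inverse c) a x = b * inverse c}" by (simp add: c_diff_def)
  qed
  moreover have "inj (\<lambda>x::'a. x + a)" by (simp add: inj_def)
  ultimately show ?thesis unfolding c_Delta_def by (simp add: card_image inj_on_subset)
qed

lemma delta0:
  fixes F :: "'a::{field,finite} \<Rightarrow> 'a"
  assumes "bij F" "c \<noteq> 1"
  shows "c_Delta F c 0 b = 1"
proof -
  have "{x. c_diff F c 0 x = b} = {x. F x = b / (1 - c)}"
    using assms(2) by (auto simp: c_diff_def field_simps)
  also have "\<dots> = {SOME x. F x = b / (1 - c)}"
  proof -
    obtain x0 where x0: "F x0 = b / (1 - c)" using assms(1) by (metis bij_pointE)
    have "\<And>y. F y = b / (1 - c) \<Longrightarrow> y = x0" using x0 assms(1) by (metis bij_pointE)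
    then have "{x. F x = b / (1 - c)} = {x0}" using x0 by blast
    moreover have "(SOME x. F x = b / (1 - c)) = x0" using x0 \<open>\<And>y. F y = b / (1 - c) \<Longrightarrow> y = x0\<close> by blast
    ultimately show ?thesis by simp
  qed
  finally show ?thesis by (simp add: c_Delta_def)
qed

lemma incl:
  fixes F :: "'a::{field,finite} \<Rightarrow> 'a"
  assumes two: "(2::'a) = 0" and c: "c \<noteq> 0" and bij: "bij F"
  shows "{c_Delta F c a b | a b. a \<noteq> 0 \<or> c \<noteq> 1}
     \<subseteq> {c_Delta F (inverse c) a b | a b. a \<noteq> 0 \<or> inverse c \<noteq> 1}"
proof
  fix v assume "v \<in> {c_Delta F c a b | a b. a \<noteq> 0 \<or> c \<noteq> 1}"
  then obtain a b where v: "v = c_Delta F c a b" and ab: "a \<noteq> 0 \<or> c \<noteq> 1" by blast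
  show "v \<in> {c_Delta F (inverse c) a b | a b. a \<noteq> 0 \<or> inverse c \<noteq> 1}"
  proof (cases "a = 0")
    case False
    then show ?thesis using part1[OF two c, of F a b] v by blast
  next
    case True
    then have c1: "c \<noteq> 1" using ab by simp
    then have ic1: "inverse c \<noteq> 1" by (metis inverse_1 inverse_inverse_eq)
    have "v = c_Delta F (inverse c) 0 b" using v True delta0[OF bij c1] delta0[OF bij ic1] by simp
    then show ?thesis using ic1 by blast
  qed
qed

theorem mainTheorem1:
  fixes F :: "'a::{field,finite} \<Rightarrow> 'a" and c :: 'a and n :: nat
  assumes "n \<ge> 1"
    and "card (UNIV :: 'a set) = 2 ^ n"
    and "c \<noteq> 0"
  shows "(\<forall>a b. a \<noteq> 0 \<longrightarrow> c_Delta F c a b = c_Delta F (inverse c) a (b * inverse c))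
         \<and> (bij F \<longrightarrow> c_unif F c = c_unif F (inverse c))"
proof -
  have two: "(2::'a) = 0" using char2 assms(1,2) by blast
  have ic: "inverse c \<noteq> 0" using assms(3) by simp
  show ?thesis
  proof (intro conjI allI impI)
    fix a b :: 'a assume "a \<noteq> 0"
    show "c_Delta F c a b = c_Delta F (inverse c) a (b * inverse c)" using part1[OF two assms(3)] .
  next
    assume b: "bij F"
    have "{c_Delta F c a b | a b. a \<noteq> 0 \<or> c \<noteq> 1}
       = {c_Delta F (inverse c) a b | a b. a \<noteq> 0 \<or> inverse c \<noteq> 1}"
      using incl[OF two assms(3) b] incl[OF two ic b] by simp
    then show "c_unif F c = c_unif F (inverse c)" by (simp add: c_unif_def)
  qed
qed

end
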